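(* Assume $\gamma<\frac14$. If (a) $\rho^s_{in}+\rho^s_{out}<\frac12$ and (b) $|g(S_s\cap\mathcal T_r)-\mu_r|\ge(1-4\gamma)|g(S_s\cap\mathcal T_r)-\mu_s|$ for all $r\ne s$, then $$|g(S_s)-\mu_s|\le 2(1-\rho^s_{out})|g(S_s\cap\mathcal T_s)-\mu_s|+\frac{2}{1-4\gamma}\sum_{r\ne s}\rho^s_{in}(r)|g(S_s\cap\mathcal T_r)-\mu_r|.$$
   Context: Points $x_1,\dots,x_N$ are real numbers, each drawn from one of $\beta$ distributions with distinct means $\mu_1,\dots,\mu_\beta$; $\mathcal T_s$ is the set of points from distribution $s$, $n_s=|\mathcal T_s|$. $\nu_1,\dots,\nu_\beta$ are real cluster centers, $S_r=\{x_i:|x_i-\nu_r|\le|x_i-\nu_s|\ \forall s\}$, and $S_s$ is assumed nonempty. For a nonempty set $S$, $g(S)=\frac1{|S|}\sum_{x\in S}x$ (terms with empty $S_s\cap\mathcal T_r$ have coefficient zero). $\gamma=\max_{s,\,r\ne s}\frac{|\mu_s-\nu_s|}{|\mu_r-\mu_s|}$. $\rho^s_{in}(r)=\frac{|\mathcal T_r\cap S_s|}{n_s}$, $\rho^s_{in}=\sum_{r\ne s}\rho^s_{in}(r)$, $\rho^s_{out}=\frac{\sum_{r\ne s}|\mathcal T_s\cap S_r|}{n_s}$. *)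

theory Defs
  imports Complex_Main
begin

(* Points are indexed by i < N; lab i < beta is the distribution point i was drawn from. *)

definition Tset :: "nat \<Rightarrow> (nat \<Rightarrow> nat) \<Rightarrow> nat \<Rightarrow> nat set" where
  "Tset N lab s = {i. i < N \<and> lab i = s}"

definition Sset :: "nat \<Rightarrow> nat \<Rightarrow> (nat \<Rightarrow> real) \<Rightarrow> (nat \<Rightarrow> real) \<Rightarrow> nat \<Rightarrow> nat set" where
  "Sset N \<beta> x \<nu> r = {i. i < N \<and> (\<forall>s<\<beta>. \<bar>x i - \<nu> r\<bar> \<le> \<bar>x i - \<nu> s\<bar>)}"

definition gmean :: "(nat \<Rightarrow> real) \<Rightarrow> nat set \<Rightarrow> real" where
  "gmean x A = (\<Sum>i\<in>A. x i) / real (card A)"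

definition gamma :: "nat \<Rightarrow> (nat \<Rightarrow> real) \<Rightarrow> (nat \<Rightarrow> real) \<Rightarrow> real" where
  "gamma \<beta> \<mu> \<nu> = Max (insert 0 {\<bar>\<mu> s - \<nu> s\<bar> / \<bar>\<mu> r - \<mu> s\<bar> | s r. s < \<beta> \<and> r < \<beta> \<and> r \<noteq> s})"

definition rho_in_r :: "nat \<Rightarrow> nat \<Rightarrow> (nat \<Rightarrow> nat) \<Rightarrow> (nat \<Rightarrow> real) \<Rightarrow> (nat \<Rightarrow> real) \<Rightarrow> nat \<Rightarrow> nat \<Rightarrow> real" where
  "rho_in_r N \<beta> lab x \<nu> s r =
     real (card (Tset N lab r \<inter> Sset N \<beta> x \<nu> s)) / real (card (Tset N lab s))"

definition rho_in :: "nat \<Rightarrow> nat \<Rightarrow> (nat \<Rightarrow> nat) \<Rightarrow> (nat \<Rightarrow> real) \<Rightarrow> (nat \<Rightarrow> real) \<Rightarrow> nat \<Rightarrow> real" where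
  "rho_in N \<beta> lab x \<nu> s = (\<Sum>r\<in>{..<\<beta>} - {s}. rho_in_r N \<beta> lab x \<nu> s r)"

definition rho_out :: "nat \<Rightarrow> nat \<Rightarrow> (nat \<Rightarrow> nat) \<Rightarrow> (nat \<Rightarrow> real) \<Rightarrow> (nat \<Rightarrow> real) \<Rightarrow> nat \<Rightarrow> real" where
  "rho_out N \<beta> lab x \<nu> s =
     real (\<Sum>r\<in>{..<\<beta>} - {s}. card (Tset N lab s \<inter> Sset N \<beta> x \<nu> r)) / real (card (Tset N lab s))"

end

theory Submission
  imports Defs
begin

lemma cover:
  assumes "i < N" "s < \<beta>"
  shows "\<exists>r<\<beta>. i \<in> Sset N \<beta> x \<nu> r"
proof -
  let ?A = "(\<lambda>r. \<bar>x i - \<nu> r\<bar>) ` {..<\<beta>}"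
  have fin: "finite ?A" and ne: "?A \<noteq> {}" using assms by auto
  have "Min ?A \<in> ?A" using Min_in[OF fin ne] .
  then obtain r where r: "r < \<beta>" "Min ?A = \<bar>x i - \<nu> r\<bar>" by auto
  have "\<forall>t<\<beta>. \<bar>x i - \<nu> r\<bar> \<le> \<bar>x i - \<nu> t\<bar>"
    using r fin by (metis Min_le image_eqI lessThan_iff)
  then show ?thesis using r assms unfolding Sset_def by auto
qed

lemma sum_gmean:
  assumes "finite A"
  shows "(\<Sum>i\<in>A. x i - c) = real (card A) * (gmean x A - c)"
proof (cases "A = {}")
  case True then show ?thesis by simp
next
  case False
  then have "card A > 0" using assms by (simp add: card_gt_0_iff)
  then show ?thesis unfolding gmean_def by (simp add: sum_subtractf field_simps)
qed

theorem lemma10: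
  fixes N \<beta> s :: nat and lab :: "nat \<Rightarrow> nat" and x \<mu> \<nu> :: "nat \<Rightarrow> real"
  assumes lab: "\<And>i. i < N \<Longrightarrow> lab i < \<beta>"
    and mu_distinct: "inj_on \<mu> {..<\<beta>}"
    and s: "s < \<beta>"
    and S_ne: "Sset N \<beta> x \<nu> s \<noteq> {}"
    and n_pos: "card (Tset N lab s) > 0"
    and gam: "gamma \<beta> \<mu> \<nu> < 1/4"
    and a: "rho_in N \<beta> lab x \<nu> s + rho_out N \<beta> lab x \<nu> s < 1/2"
    and b: "\<And>r. r < \<beta> \<Longrightarrow> r \<noteq> s \<Longrightarrow> Sset N \<beta> x \<nu> s \<inter> Tset N lab r \<noteq> {} \<Longrightarrow>
              \<bar>gmean x (Sset N \<beta> x \<nu> s \<inter> Tset N lab r) - \<mu> r\<bar>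
                \<ge> (1 - 4 * gamma \<beta> \<mu> \<nu>) * \<bar>gmean x (Sset N \<beta> x \<nu> s \<inter> Tset N lab r) - \<mu> s\<bar>"
  shows "\<bar>gmean x (Sset N \<beta> x \<nu> s) - \<mu> s\<bar>
    \<le> 2 * (1 - rho_out N \<beta> lab x \<nu> s) * \<bar>gmean x (Sset N \<beta> x \<nu> s \<inter> Tset N lab s) - \<mu> s\<bar>
      + 2 / (1 - 4 * gamma \<beta> \<mu> \<nu>) *
        (\<Sum>r\<in>{..<\<beta>} - {s}. rho_in_r N \<beta> lab x \<nu> s r *
           \<bar>gmean x (Sset N \<beta> x \<nu> s \<inter> Tset N lab r) - \<mu> r\<bar>)"
proof -
  define S where "S = Sset N \<beta> x \<nu> s"
  define T where "T = Tset N lab"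
  define \<gamma> where "\<gamma> = gamma \<beta> \<mu> \<nu>"
  define m where "m = real (card S)"
  define n where "n = real (card (T s))"
  define g where "g r = gmean x (S \<inter> T r)" for r
  define c where "c r = real (card (S \<inter> T r))" for r
  define po where "po = rho_out N \<beta> lab x \<nu> s"
  have SN: "S \<subseteq> {..<N}" unfolding S_def Sset_def by auto
  have TN: "T r \<subseteq> {..<N}" for r unfolding T_def Tset_def by auto
  have finS: "finite S" using SN finite_subset by blast
  have finT: "finite (T r)" for r using TN finite_subset by blast
  have mpos: "m > 0" unfolding m_def using finS S_ne S_def by (simp add: card_gt_0_iff)
  have npos: "n > 0" unfolding n_def T_def using n_pos by simp
  have g4: "1 - 4 * \<gamma> > 0" using gam \<gamma>_def by simp
  have rin_r: "rho_in_r N \<beta> lab x \<nu> s r = c r / n" for r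
    unfolding rho_in_r_def c_def n_def S_def T_def by (simp add: Int_commute)
  have rin_nn: "rho_in N \<beta> lab x \<nu> s \<ge> 0"
    unfolding rho_in_def by (intro sum_nonneg) (simp add: rho_in_r_def)
  have po_lt: "po < 1/2" using a rin_nn po_def by simp
  have sub: "T s - S \<subseteq> (\<Union>r\<in>{..<\<beta>} - {s}. T s \<inter> Sset N \<beta> x \<nu> r)"
  proof
    fix i assume i: "i \<in> T s - S"
    then have "i < N" using TN by auto
    then obtain r where r: "r < \<beta>" "i \<in> Sset N \<beta> x \<nu> r" using cover s by blast
    then have "r \<noteq> s" using i S_def by auto
    then show "i \<in> (\<Union>r\<in>{..<\<beta>} - {s}. T s \<inter> Sset N \<beta> x \<nu> r)" using r i by auto
  qed
  have "card (T s - S) \<le> card (\<Union>r\<in>{..<\<beta>} - {s}. T s \<inter> Sset N \<beta> x \<nu> r)"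
    by (rule card_mono[OF _ sub]) (auto intro: finT)
  also have "\<dots> \<le> (\<Sum>r\<in>{..<\<beta>} - {s}. card (T s \<inter> Sset N \<beta> x \<nu> r))"
    by (rule card_UN_le) auto
  finally have cd0: "real (card (T s - S)) \<le> real (\<Sum>r\<in>{..<\<beta>} - {s}. card (T s \<inter> Sset N \<beta> x \<nu> r))"
    by (simp only: of_nat_le_iff)
  have "po * n = real (\<Sum>r\<in>{..<\<beta>} - {s}. card (T s \<inter> Sset N \<beta> x \<nu> r))"
    unfolding po_def rho_out_def n_def T_def using npos n_def T_def by simp
  then have cd: "real (card (T s - S)) \<le> po * n" using cd0 by simp
  have "card (T s) = card (T s - S) + card (S \<inter> T s)"
    using card_Int_Diff[OF finT, of s S] by (simp add: Int_commute)
  then have "n = real (card (T s - S)) + c s" unfolding n_def c_def by simp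
  then have cs_ge: "c s \<ge> (1 - po) * n" using cd by (simp add: algebra_simps)
  have cs_le: "c s \<le> m" unfolding c_def m_def using finS by (simp add: card_mono)
  have "po * n \<le> (1/2) * n" using po_lt npos by (intro mult_right_mono) auto
  then have nm: "n \<le> 2 * m" using cs_ge cs_le by (simp add: algebra_simps)
  have "(\<Sum>i\<in>S. x i - \<mu> s) = (\<Sum>r\<in>{..<\<beta>}. \<Sum>i\<in>{i\<in>S. lab i = r}. x i - \<mu> s)"
    by (rule sum.group[symmetric]) (use finS SN lab in auto)
  also have "\<dots> = (\<Sum>r\<in>{..<\<beta>}. c r * (g r - \<mu> s))"
  proof (rule sum.cong[OF refl])
    fix r
    have "{i\<in>S. lab i = r} = S \<inter> T r" using SN unfolding T_def Tset_def by auto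
    then show "(\<Sum>i\<in>{i\<in>S. lab i = r}. x i - \<mu> s) = c r * (g r - \<mu> s)"
      unfolding c_def g_def using sum_gmean finS by simp
  qed
  finally have dec: "m * (gmean x S - \<mu> s) = (\<Sum>r\<in>{..<\<beta>}. c r * (g r - \<mu> s))"
    using sum_gmean[OF finS, of x "\<mu> s"] m_def by simp
  have "m * \<bar>gmean x S - \<mu> s\<bar> \<le> (\<Sum>r\<in>{..<\<beta>}. c r * \<bar>g r - \<mu> s\<bar>)"
    using dec mpos sum_abs[of "\<lambda>r. c r * (g r - \<mu> s)" "{..<\<beta>}"]
    by (simp add: abs_mult c_def)
  also have "\<dots> = c s * \<bar>g s - \<mu> s\<bar> + (\<Sum>r\<in>{..<\<beta>} - {s}. c r * \<bar>g r - \<mu> s\<bar>)"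
    using s by (simp add: sum.remove)
  also have "\<dots> \<le> m * (2 * (1 - po) * \<bar>g s - \<mu> s\<bar>) +
      m * (2 / (1 - 4 * \<gamma>) * (\<Sum>r\<in>{..<\<beta>} - {s}. c r / n * \<bar>g r - \<mu> r\<bar>))"
  proof (rule add_mono)
    have "m * 1 \<le> m * (2 * (1 - po))" using po_lt mpos by (intro mult_left_mono) auto
    then have "c s \<le> m * (2 * (1 - po))" using cs_le by simp
    then show "c s * \<bar>g s - \<mu> s\<bar> \<le> m * (2 * (1 - po) * \<bar>g s - \<mu> s\<bar>)"
      by (metis abs_ge_zero mult.assoc mult_right_mono)
  next
    have "m * (2 / (1 - 4 * \<gamma>) * (\<Sum>r\<in>{..<\<beta>} - {s}. c r / n * \<bar>g r - \<mu> r\<bar>))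
        = (\<Sum>r\<in>{..<\<beta>} - {s}. (2 * m / n) * (c r * (\<bar>g r - \<mu> r\<bar> / (1 - 4 * \<gamma>))))"
      by (simp add: sum_distrib_left field_simps)
    also have "\<dots> \<ge> (\<Sum>r\<in>{..<\<beta>} - {s}. c r * \<bar>g r - \<mu> s\<bar>)"
    proof (rule sum_mono)
      fix r assume r: "r \<in> {..<\<beta>} - {s}"
      have c0: "c r \<ge> 0" unfolding c_def by simp
      have k: "2 * m / n \<ge> 1" using nm npos by simp
      have "c r * \<bar>g r - \<mu> s\<bar> \<le> c r * (\<bar>g r - \<mu> r\<bar> / (1 - 4 * \<gamma>))"
      proof (cases "S \<inter> T r = {}")
        case True then show ?thesis unfolding c_def by simp
      next
        case False
        then have "\<bar>g r - \<mu> r\<bar> \<ge> (1 - 4 * \<gamma>) * \<bar>g r - \<mu> s\<bar>"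
          using b[of r] r unfolding g_def S_def T_def \<gamma>_def by auto
        then have "\<bar>g r - \<mu> s\<bar> \<le> \<bar>g r - \<mu> r\<bar> / (1 - 4 * \<gamma>)"
          using g4 by (simp add: field_simps)
        then show ?thesis using c0 by (rule mult_left_mono)
      qed
      also have "\<dots> \<le> (2 * m / n) * (c r * (\<bar>g r - \<mu> r\<bar> / (1 - 4 * \<gamma>)))"
      proof -
        have "0 \<le> c r * (\<bar>g r - \<mu> r\<bar> / (1 - 4 * \<gamma>))" using c0 g4 by simp
        from mult_right_mono[OF k this] show ?thesis by simp
      qed
      finally show "c r * \<bar>g r - \<mu> s\<bar> \<le> (2 * m / n) * (c r * (\<bar>g r - \<mu> r\<bar> / (1 - 4 * \<gamma>)))" .
    qed
    finally show "(\<Sum>r\<in>{..<\<beta>} - {s}. c r * \<bar>g r - \<mu> s\<bar>) \<le>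
      m * (2 / (1 - 4 * \<gamma>) * (\<Sum>r\<in>{..<\<beta>} - {s}. c r / n * \<bar>g r - \<mu> r\<bar>))" .
  qed
  finally have "m * \<bar>gmean x S - \<mu> s\<bar> \<le> m * (2 * (1 - po) * \<bar>g s - \<mu> s\<bar> +
      2 / (1 - 4 * \<gamma>) * (\<Sum>r\<in>{..<\<beta>} - {s}. c r / n * \<bar>g r - \<mu> r\<bar>))"
    by (simp add: distrib_left)
  then have "\<bar>gmean x S - \<mu> s\<bar> \<le> 2 * (1 - po) * \<bar>g s - \<mu> s\<bar> +
      2 / (1 - 4 * \<gamma>) * (\<Sum>r\<in>{..<\<beta>} - {s}. c r / n * \<bar>g r - \<mu> r\<bar>)"
    using mpos by simp
  then show ?thesis unfolding S_def po_def \<gamma>_def g_def T_def rin_r[symmetric] .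
qed

end
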